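(* Let $\mathcal H=(\mathcal V,\mathcal E)$ be a hypergraph and $\vec x$ an optimal solution to the LP $\max\{\sum_ew_ex_e:\sum_{e\ni v}x_e\le1\ \forall v\in\mathcal V,\ \vec x\in[0,1]^{\mathcal E}\}$. Run the algorithm $\mathrm{HM}(\alpha)$ described in the context with $\alpha=1$. Then each edge $e$ is added to the output matching with probability at least $\frac{x_e}{k_e+1+o(k_e)}$, where $k_e=|e|$.
   Context: Algorithm $\mathrm{HM}(\alpha)$: for each edge $e$ generate an independent Bernoulli random variable $Y_e$ with mean $\alpha x_e$; assign to each edge an independent uniformly random number in $[0,1]$ and consider the edges in increasing order of these numbers; when considering $e$, add $e$ to the matching $\mathcal R$ iff $Y_e=1$ and $e$ is safe (no vertex of $e$ is already covered by an edge in $\mathcal R$); return $\mathcal R$. *)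

theory Defs
  imports "HOL-Probability.Probability" "HOL-Combinatorics.Multiset_Permutations"
          "HOL-Library.Landau_Symbols"
begin

definition hypergraph :: "nat set \<Rightarrow> nat set \<Rightarrow> (nat \<Rightarrow> nat set) \<Rightarrow> bool" where
  "hypergraph V E verts \<longleftrightarrow> finite V \<and> finite E \<and>
     (\<forall>e\<in>E. verts e \<subseteq> V \<and> verts e \<noteq> {})"

definition lp_feasible :: "nat set \<Rightarrow> nat set \<Rightarrow> (nat \<Rightarrow> nat set) \<Rightarrow> (nat \<Rightarrow> real) \<Rightarrow> bool" where
  "lp_feasible V E verts x \<longleftrightarrow>
     (\<forall>e\<in>E. 0 \<le> x e \<and> x e \<le> 1) \<and>
     (\<forall>v\<in>V. (\<Sum>e\<in>{e\<in>E. v \<in> verts e}. x e) \<le> 1)"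

definition lp_optimal :: "nat set \<Rightarrow> nat set \<Rightarrow> (nat \<Rightarrow> nat set) \<Rightarrow> (nat \<Rightarrow> real) \<Rightarrow> (nat \<Rightarrow> real) \<Rightarrow> bool" where
  "lp_optimal V E verts w x \<longleftrightarrow> lp_feasible V E verts x \<and>
     (\<forall>y. lp_feasible V E verts y \<longrightarrow> (\<Sum>e\<in>E. w e * y e) \<le> (\<Sum>e\<in>E. w e * x e))"

fun greedy :: "(nat \<Rightarrow> nat set) \<Rightarrow> (nat \<Rightarrow> bool) \<Rightarrow> nat list \<Rightarrow> nat set \<Rightarrow> nat set" where
  "greedy verts Y [] R = R"
| "greedy verts Y (e # es) R =
     greedy verts Y es
       (if Y e \<and> (\<forall>f\<in>R. verts f \<inter> verts e = {}) then insert e R else R)"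

text \<open>Algorithm HM(alpha): independent Bernoulli(alpha * x e) variables, and a
  uniformly random order of the edges (the order induced by i.i.d. uniform [0,1]
  labels, which is a uniformly random permutation almost surely).\<close>
definition HM :: "real \<Rightarrow> nat set \<Rightarrow> (nat \<Rightarrow> nat set) \<Rightarrow> (nat \<Rightarrow> real) \<Rightarrow> nat set pmf" where
  "HM \<alpha> E verts x =
     do { Y \<leftarrow> Pi_pmf E False (\<lambda>e. bernoulli_pmf (\<alpha> * x e));
          \<sigma> \<leftarrow> pmf_of_set (permutations_of_set E);
          return_pmf (greedy verts Y \<sigma> {}) }"

end

theory Submission
  imports Defs
begin

lemma prob_bind_pmf':
  "measure_pmf.prob (bind_pmf M N) X = measure_pmf.expectation M (\<lambda>x. measure_pmf.prob (N x) X)"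
proof -
  have "ennreal (measure_pmf.prob (bind_pmf M N) X) = emeasure (bind_pmf M N) X"
    by (simp add: measure_pmf.emeasure_eq_measure)
  also have "\<dots> = (\<integral>\<^sup>+x. emeasure (N x) X \<partial>M)"
    by (rule emeasure_bind_pmf)
  also have "\<dots> = (\<integral>\<^sup>+x. ennreal (measure_pmf.prob (N x) X) \<partial>M)"
    by (simp add: measure_pmf.emeasure_eq_measure)
  also have "\<dots> = ennreal (measure_pmf.expectation M (\<lambda>x. measure_pmf.prob (N x) X))"
    by (rule nn_integral_eq_integral)
       (auto intro!: measure_pmf.integrable_const_bound[where B=1])
  finally show ?thesis
    by (simp add: Bochner_Integration.integral_nonneg)
qed

lemma integrable_bounded_pmf:
  fixes f :: "'a \<Rightarrow> real"
  assumes "\<And>x. \<bar>f x\<bar> \<le> B"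
  shows "integrable (measure_pmf M) f"
  by (rule measure_pmf.integrable_const_bound[where B=B]) (use assms in auto)

lemma zero_small_o: "(\<lambda>_. 0::real) \<in> o(\<lambda>k. real k)"
  by simp

lemma exp_prod_ind:
  assumes "finite E" "S \<subseteq> E" "\<forall>a\<in>E. 0 \<le> x a \<and> x a \<le> 1"
  shows "measure_pmf.expectation (Pi_pmf E False (\<lambda>e. bernoulli_pmf (x e)))
           (\<lambda>Y. \<Prod>a\<in>S. (if Y a then 1 else 0 :: real)) = (\<Prod>a\<in>S. x a)"
proof -
  define g where "g = (\<lambda>a (b::bool). if a \<in> S then (if b then 1 else 0::real) else 1)"
  have fS: "finite S" using assms finite_subset by blast
  have 1: "(\<Prod>a\<in>E. g a (Y a)) = (\<Prod>a\<in>S. (if Y a then 1 else 0 :: real))" for Y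
  proof -
    have "(\<Prod>a\<in>E. g a (Y a)) = (\<Prod>a\<in>E \<inter> S. (if Y a then 1 else 0 :: real))"
      unfolding g_def by (subst prod.inter_restrict[OF assms(1)]) simp
    also have "E \<inter> S = S" using assms(2) by blast
    finally show ?thesis .
  qed
  have e: "measure_pmf.expectation (bernoulli_pmf (x a)) (g a) = (if a \<in> S then x a else 1)"
    if "a \<in> E" for a
  proof -
    have "measure_pmf.expectation (bernoulli_pmf (x a)) (g a) = (\<Sum>b\<in>UNIV. g a b * pmf (bernoulli_pmf (x a)) b)"
      by (rule integral_measure_pmf_real) auto
    also have "\<dots> = (if a \<in> S then x a else 1)"
      using assms(3) that by (auto simp: g_def UNIV_bool)
    finally show ?thesis .
  qed
  have "measure_pmf.expectation (Pi_pmf E False (\<lambda>e. bernoulli_pmf (x e))) (\<lambda>Y. \<Prod>a\<in>E. g a (Y a))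
        = (\<Prod>a\<in>E. measure_pmf.expectation (bernoulli_pmf (x a)) (g a))"
    by (rule expectation_prod_Pi_pmf[OF assms(1)])
       (auto intro!: integrable_bounded_pmf[where B=1] simp: g_def)
  also have "\<dots> = (\<Prod>a\<in>E. (if a \<in> S then x a else 1))"
    by (rule prod.cong) (auto simp: e)
  also have "\<dots> = (\<Prod>a\<in>S. x a)"
    by (subst prod.inter_restrict[OF assms(1), symmetric]) (use assms(2) in \<open>simp add: Int_absorb1\<close>)
  finally show ?thesis by (simp add: 1)
qed


lemma greedy_mono: "e \<in> R \<Longrightarrow> e \<in> greedy verts Y \<sigma> R"
  by (induction \<sigma> arbitrary: R) auto

lemma greedy_in:
  assumes "Y e" "e \<in> set \<sigma>" "set \<sigma> \<subseteq> E" "\<forall>f\<in>R. verts f \<inter> verts e = {}"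
    "hd (filter (\<lambda>a. a \<in> T) \<sigma>) = e" "e \<in> T"
    "\<forall>a\<in>E. a \<noteq> e \<longrightarrow> a \<notin> T \<longrightarrow> \<not> Y a \<or> verts a \<inter> verts e = {}"
  shows "e \<in> greedy verts Y \<sigma> R"
  using assms
proof (induction \<sigma> arbitrary: R)
  case Nil then show ?case by simp
next
  case (Cons a \<sigma>)
  show ?case
  proof (cases "a = e")
    case True
    then show ?thesis using Cons.prems by (auto intro!: greedy_mono simp: Int_commute)
  next
    case False
    have aT: "a \<notin> T" using Cons.prems False by (auto split: if_splits)
    have aE: "a \<in> E" using Cons.prems by auto
    define R' where "R' = (if Y a \<and> (\<forall>f\<in>R. verts f \<inter> verts a = {}) then insert a R else R)"
    have "\<forall>f\<in>R'. verts f \<inter> verts e = {}"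
      using Cons.prems(4,7) aT aE False by (auto simp: R'_def)
    moreover have "e \<in> set \<sigma>" "set \<sigma> \<subseteq> E" "hd (filter (\<lambda>a. a \<in> T) \<sigma>) = e"
      using Cons.prems False aT by auto
    ultimately have "e \<in> greedy verts Y \<sigma> R'"
      using Cons.IH Cons.prems by blast
    then show ?thesis by (simp add: R'_def)
  qed
qed

lemma hd_filter_in:
  assumes "\<sigma> \<in> permutations_of_set E" "T \<subseteq> E" "T \<noteq> {}"
  shows "hd (filter (\<lambda>a. a \<in> T) \<sigma>) \<in> T"
proof -
  have "filter (\<lambda>a. a \<in> T) \<sigma> \<noteq> []"
    using assms by (auto simp: permutations_of_set_def filter_empty_conv)
  then have "hd (filter (\<lambda>a. a \<in> T) \<sigma>) \<in> set (filter (\<lambda>a. a \<in> T) \<sigma>)" by (rule hd_in_set)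
  then show ?thesis by auto
qed

lemma first_card_le:
  assumes "finite E" "T \<subseteq> E" "a \<in> T" "b \<in> T"
  shows "card {\<sigma>\<in>permutations_of_set E. hd (filter (\<lambda>c. c \<in> T) \<sigma>) = a}
       \<le> card {\<sigma>\<in>permutations_of_set E. hd (filter (\<lambda>c. c \<in> T) \<sigma>) = b}"
proof -
  define \<tau> where "\<tau> = Transposition.transpose a b"
  have perm: "\<tau> permutes E" unfolding \<tau>_def using assms by (intro permutes_swap_id) auto
  have inj: "inj (map \<tau>)" using permutes_inj[OF perm] by simp
  have Tinv: "(\<lambda>c. c \<in> T) \<circ> \<tau> = (\<lambda>c. c \<in> T)"
    using assms by (auto simp: \<tau>_def Transposition.transpose_def fun_eq_iff)
  have "map \<tau> ` {\<sigma>\<in>permutations_of_set E. hd (filter (\<lambda>c. c \<in> T) \<sigma>) = a}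
        \<subseteq> {\<sigma>\<in>permutations_of_set E. hd (filter (\<lambda>c. c \<in> T) \<sigma>) = b}"
  proof
    fix \<sigma>' assume "\<sigma>' \<in> map \<tau> ` {\<sigma>\<in>permutations_of_set E. hd (filter (\<lambda>c. c \<in> T) \<sigma>) = a}"
    then obtain \<sigma> where s: "\<sigma> \<in> permutations_of_set E" "hd (filter (\<lambda>c. c \<in> T) \<sigma>) = a" "\<sigma>' = map \<tau> \<sigma>"
      by auto
    have ne: "filter (\<lambda>c. c \<in> T) \<sigma> \<noteq> []"
      using s assms by (auto simp: permutations_of_set_def filter_empty_conv)
    have "\<sigma>' \<in> permutations_of_set E"
      using s permutations_of_set_image_permutes[OF perm] by blast
    moreover have "hd (filter (\<lambda>c. c \<in> T) \<sigma>') = b"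
      using s ne by (simp add: filter_map Tinv hd_map) (simp add: \<tau>_def)
    ultimately show "\<sigma>' \<in> {\<sigma>\<in>permutations_of_set E. hd (filter (\<lambda>c. c \<in> T) \<sigma>) = b}" by simp
  qed
  then have "card (map \<tau> ` {\<sigma>\<in>permutations_of_set E. hd (filter (\<lambda>c. c \<in> T) \<sigma>) = a})
        \<le> card {\<sigma>\<in>permutations_of_set E. hd (filter (\<lambda>c. c \<in> T) \<sigma>) = b}"
    by (intro card_mono) auto
  moreover have "card (map \<tau> ` {\<sigma>\<in>permutations_of_set E. hd (filter (\<lambda>c. c \<in> T) \<sigma>) = a})
     = card {\<sigma>\<in>permutations_of_set E. hd (filter (\<lambda>c. c \<in> T) \<sigma>) = a}"
    by (rule card_image) (use inj in \<open>auto simp: inj_on_def\<close>)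
  ultimately show ?thesis by simp
qed

lemma first_prob:
  assumes "finite E" "T \<subseteq> E" "e \<in> T"
  shows "measure_pmf.prob (pmf_of_set (permutations_of_set E)) {\<sigma>. hd (filter (\<lambda>c. c \<in> T) \<sigma>) = e}
         = 1 / real (card T)"
proof -
  define P where "P = permutations_of_set E"
  define C where "C = (\<lambda>a. {\<sigma>\<in>P. hd (filter (\<lambda>c. c \<in> T) \<sigma>) = a})"
  have fT: "finite T" using assms finite_subset by blast
  have Pne: "P \<noteq> {}" "finite P" using assms by (auto simp: P_def)
  have eq: "card (C a) = card (C e)" if "a \<in> T" for a
    using first_card_le[OF assms(1,2) that assms(3)] first_card_le[OF assms(1,2) assms(3) that]
    unfolding C_def P_def by simp
  have "P = (\<Union>a\<in>T. C a)"
    using hd_filter_in[OF _ assms(2)] assms(3) unfolding C_def P_def by blast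
  then have "card P = (\<Sum>a\<in>T. card (C a))"
    using card_UN_disjoint[OF fT, of C] Pne(2) unfolding C_def by auto
  also have "\<dots> = card T * card (C e)" using eq by simp
  finally have cP: "card P = card T * card (C e)" .
  have "measure_pmf.prob (pmf_of_set P) {\<sigma>. hd (filter (\<lambda>c. c \<in> T) \<sigma>) = e}
        = card (P \<inter> {\<sigma>. hd (filter (\<lambda>c. c \<in> T) \<sigma>) = e}) / card P"
    using Pne by (simp add: measure_pmf_of_set)
  also have "P \<inter> {\<sigma>. hd (filter (\<lambda>c. c \<in> T) \<sigma>) = e} = C e" by (auto simp: C_def)
  also have "real (card (C e)) / real (card P) = 1 / real (card T)"
    using cP Pne by (auto simp: field_simps card_gt_0_iff)
  finally show ?thesis by (simp add: P_def)
qed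


lemma tangent_bound:
  fixes s m :: real assumes "0 \<le> s" "0 \<le> m"
  shows "1/(m+1) - (s-m)/(m+1)^2 \<le> 1/(s+1)"
proof -
  have sq: "0 \<le> (s-m)^2" by simp
  have e1: "1/(m+1) = (m+1)/(m+1)^2" using assms by (simp add: power2_eq_square)
  have "1/(m+1) - (s-m)/(m+1)^2 = ((m+1) - (s-m))/(m+1)^2"
    unfolding e1 by (rule diff_divide_distrib[symmetric])
  also have "(m+1) - (s-m) = 2*m+1-s" by simp
  also have "(2*m+1-s)*(s+1) \<le> (m+1)^2" using sq by (simp add: power2_eq_square algebra_simps)
  then have "(2*m+1-s)/(m+1)^2 \<le> 1/(s+1)"
    using assms by (simp add: divide_simps)
  finally show ?thesis .
qed

lemma m_le_k:
  assumes hg: "hypergraph V E verts" and feas: "lp_feasible V E verts x" and eE: "e \<in> E"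
  shows "(\<Sum>f\<in>{f\<in>E. f\<noteq>e \<and> verts f \<inter> verts e \<noteq> {}}. x f) \<le> real (card (verts e))"
proof -
  define N where "N = {f\<in>E. f\<noteq>e \<and> verts f \<inter> verts e \<noteq> {}}"
  have fE: "finite E" and fV: "finite V" using hg by (auto simp: hypergraph_def)
  have ve: "verts e \<subseteq> V" using hg eE by (auto simp: hypergraph_def)
  have fve: "finite (verts e)" using ve fV finite_subset by blast
  have fN: "finite N" using fE by (auto simp: N_def)
  have x0: "\<forall>f\<in>E. 0 \<le> x f" and vs: "\<forall>v\<in>V. (\<Sum>f\<in>{f\<in>E. v \<in> verts f}. x f) \<le> 1"
    using feas by (auto simp: lp_feasible_def)
  have "(\<Sum>f\<in>N. x f) \<le> (\<Sum>f\<in>N. x f * real (card (verts f \<inter> verts e)))"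
  proof (rule sum_mono)
    fix f assume f: "f \<in> N"
    then have "card (verts f \<inter> verts e) \<ge> 1" using fve by (auto simp: N_def card_gt_0_iff[symmetric] Suc_le_eq)
    then show "x f \<le> x f * real (card (verts f \<inter> verts e))"
      using x0 f by (auto simp: N_def intro: mult_left_mono[where c="x f" and a=1, simplified])
  qed
  also have "\<dots> = (\<Sum>f\<in>N. \<Sum>v\<in>verts e. (if v \<in> verts f then x f else 0))"
  proof (rule sum.cong[OF refl])
    fix f
    have "(\<Sum>v\<in>verts e. (if v \<in> verts f then x f else 0)) = (\<Sum>v\<in>verts e \<inter> verts f. x f)"
      by (simp add: sum.inter_restrict[OF fve, symmetric])
    then show "x f * real (card (verts f \<inter> verts e)) = (\<Sum>v\<in>verts e. (if v \<in> verts f then x f else 0))"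
      by (simp add: Int_commute)
  qed
  also have "\<dots> = (\<Sum>v\<in>verts e. \<Sum>f\<in>N. (if v \<in> verts f then x f else 0))"
    by (rule sum.swap)
  also have "\<dots> \<le> (\<Sum>v\<in>verts e. 1)"
  proof (rule sum_mono)
    fix v assume v: "v \<in> verts e"
    have "(\<Sum>f\<in>N. (if v \<in> verts f then x f else 0)) = (\<Sum>f\<in>{f\<in>N. v \<in> verts f}. x f)"
      by (simp add: sum.inter_filter[OF fN])
    also have "\<dots> \<le> (\<Sum>f\<in>{f\<in>E. v \<in> verts f}. x f)"
      by (rule sum_mono2) (use fE x0 in \<open>auto simp: N_def\<close>)
    also have "\<dots> \<le> 1" using vs v ve by auto
    finally show "(\<Sum>f\<in>N. (if v \<in> verts f then x f else 0)) \<le> 1" .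
  qed
  finally show ?thesis by (simp add: N_def)
qed


lemma main_bound:
  assumes hg: "hypergraph V E verts" and feas: "lp_feasible V E verts x" and eE: "e \<in> E"
  shows "x e / (real (card (verts e)) + 1) \<le> measure_pmf.prob (HM 1 E verts x) {R. e \<in> R}"
proof -
  define N where "N = {f\<in>E. f\<noteq>e \<and> verts f \<inter> verts e \<noteq> {}}"
  define m where "m = (\<Sum>f\<in>N. x f)"
  define P where "P = permutations_of_set E"
  define p where "p = Pi_pmf E False (\<lambda>e. bernoulli_pmf (x e))"
  define I where "I = (\<lambda>(Y::nat\<Rightarrow>bool) a. if Y a then 1 else (0::real))"
  define s where "s = (\<lambda>Y. \<Sum>f\<in>N. I Y f)"
  define c1 where "c1 = 1/(m+1) + m/(m+1)^2"
  define c2 where "c2 = 1/(m+1)^2"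
  define h where "h = (\<lambda>Y. c1 * I Y e - c2 * (\<Sum>f\<in>N. I Y e * I Y f))"
  have fE: "finite E" using hg by (auto simp: hypergraph_def)
  have fN: "finite N" using fE by (auto simp: N_def)
  have NE: "N \<subseteq> E" by (auto simp: N_def)
  have x01: "\<forall>a\<in>E. 0 \<le> x a \<and> x a \<le> 1" using feas by (auto simp: lp_feasible_def)
  have m0: "0 \<le> m" unfolding m_def using x01 NE by (auto intro!: sum_nonneg)
  have mk: "m \<le> real (card (verts e))" unfolding m_def N_def by (rule m_le_k[OF hg feas eE])
  have Pne: "P \<noteq> {}" "finite P" using fE by (auto simp: P_def)
  have s0: "0 \<le> s Y" for Y unfolding s_def I_def by (auto intro!: sum_nonneg)
  have perY: "h Y \<le> measure_pmf.prob (pmf_of_set P) {\<sigma>. e \<in> greedy verts Y \<sigma> {}}" for Y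
  proof (cases "Y e")
    case False
    then show ?thesis by (simp add: h_def I_def)
  next
    case True
    define T where "T = insert e {f\<in>N. Y f}"
    have TE: "T \<subseteq> E" using eE NE by (auto simp: T_def)
    have cT: "real (card T) = s Y + 1"
    proof -
      have "e \<notin> {f\<in>N. Y f}" by (auto simp: N_def)
      then have "card T = card {f\<in>N. Y f} + 1" using fN by (simp add: T_def)
      moreover have "s Y = real (card {f\<in>N. Y f})"
        unfolding s_def I_def using fN by (simp add: sum.If_cases Int_def)
      ultimately show ?thesis by simp
    qed
    have sub: "P \<inter> {\<sigma>. hd (filter (\<lambda>c. c \<in> T) \<sigma>) = e} \<subseteq> P \<inter> {\<sigma>. e \<in> greedy verts Y \<sigma> {}}"
    proof
      fix \<sigma> assume a: "\<sigma> \<in> P \<inter> {\<sigma>. hd (filter (\<lambda>c. c \<in> T) \<sigma>) = e}"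
      then have "set \<sigma> = E" by (auto simp: P_def permutations_of_set_def)
      then have "e \<in> greedy verts Y \<sigma> {}"
        using a eE True by (intro greedy_in[where E=E and T=T]) (auto simp: T_def N_def)
      then show "\<sigma> \<in> P \<inter> {\<sigma>. e \<in> greedy verts Y \<sigma> {}}" using a by simp
    qed
    have "h Y = 1/(m+1) - (s Y - m)/(m+1)^2"
      using True by (simp add: h_def c1_def c2_def s_def I_def diff_divide_distrib add_divide_distrib)
    also have "\<dots> \<le> 1/(s Y + 1)" by (rule tangent_bound[OF s0 m0])
    also have "\<dots> = measure_pmf.prob (pmf_of_set P) {\<sigma>. hd (filter (\<lambda>c. c \<in> T) \<sigma>) = e}"
      using first_prob[OF fE TE] cT by (simp add: P_def T_def)
    also have "\<dots> = card (P \<inter> {\<sigma>. hd (filter (\<lambda>c. c \<in> T) \<sigma>) = e}) / card P"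
      using Pne by (simp add: measure_pmf_of_set)
    also have "\<dots> \<le> card (P \<inter> {\<sigma>. e \<in> greedy verts Y \<sigma> {}}) / card P"
      using sub Pne by (intro divide_right_mono) (auto intro!: card_mono)
    also have "\<dots> = measure_pmf.prob (pmf_of_set P) {\<sigma>. e \<in> greedy verts Y \<sigma> {}}"
      using Pne by (simp add: measure_pmf_of_set)
    finally show ?thesis .
  qed
  have intI: "integrable (measure_pmf p) (\<lambda>Y. I Y a * I Y b)" for a b
    by (rule integrable_bounded_pmf[where B=1]) (auto simp: I_def)
  have intI1: "integrable (measure_pmf p) (\<lambda>Y. I Y a)" for a
    by (rule integrable_bounded_pmf[where B=1]) (auto simp: I_def)
  have EIe: "measure_pmf.expectation p (\<lambda>Y. I Y e) = x e"
    using exp_prod_ind[OF fE _ x01, of "{e}"] eE by (simp add: p_def I_def)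
  have EIef: "measure_pmf.expectation p (\<lambda>Y. I Y e * I Y f) = x e * x f" if "f \<in> N" for f
  proof -
    have fe: "f \<noteq> e" "f \<in> E" using that by (auto simp: N_def)
    show ?thesis
      using exp_prod_ind[OF fE _ x01, of "{e,f}"] eE fe by (simp add: p_def I_def)
  qed
  have inth: "integrable (measure_pmf p) h"
    unfolding h_def by (intro Bochner_Integration.integrable_diff integrable_mult_right
        Bochner_Integration.integrable_sum intI intI1)
  have Eh: "measure_pmf.expectation p h = x e / (m+1)"
  proof -
    have "measure_pmf.expectation p h = c1 * x e - c2 * (\<Sum>f\<in>N. x e * x f)"
      unfolding h_def
      by (simp add: Bochner_Integration.integral_diff Bochner_Integration.integral_sum
          integrable_mult_right Bochner_Integration.integrable_sum intI intI1 EIe EIef)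
    also have "(\<Sum>f\<in>N. x e * x f) = x e * m" by (simp add: m_def sum_distrib_left)
    also have "c1 * x e - c2 * (x e * m) = x e / (m+1)"
      using m0 by (simp add: c1_def c2_def field_simps power2_eq_square)
    finally show ?thesis .
  qed
  have HMeq: "measure_pmf.prob (HM 1 E verts x) {R. e \<in> R}
        = measure_pmf.expectation p (\<lambda>Y. measure_pmf.prob (pmf_of_set P) {\<sigma>. e \<in> greedy verts Y \<sigma> {}})"
    unfolding HM_def p_def P_def
    by (simp add: prob_bind_pmf' map_pmf_def[symmetric] vimage_def)
  have "x e / (real (card (verts e)) + 1) \<le> x e / (m + 1)"
    using x01 eE m0 mk by (intro divide_left_mono) auto
  also have "\<dots> = measure_pmf.expectation p h" by (rule Eh[symmetric])
  also have "\<dots> \<le> measure_pmf.expectation p (\<lambda>Y. measure_pmf.prob (pmf_of_set P) {\<sigma>. e \<in> greedy verts Y \<sigma> {}})"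
    by (rule integral_mono[OF inth _ perY])
       (rule integrable_bounded_pmf[where B=1], simp)
  also have "\<dots> = measure_pmf.prob (HM 1 E verts x) {R. e \<in> R}" by (rule HMeq[symmetric])
  finally show ?thesis .
qed

theorem lemma7:
  "\<exists>g :: nat \<Rightarrow> real. g \<in> o(\<lambda>k. real k) \<and>
     (\<forall>V E verts w x e. hypergraph V E verts \<longrightarrow> lp_optimal V E verts w x \<longrightarrow> e \<in> E \<longrightarrow>
        x e / (real (card (verts e)) + 1 + g (card (verts e)))
          \<le> measure_pmf.prob (HM 1 E verts x) {R. e \<in> R})"
  by (rule exI[of _ "\<lambda>_. 0"]) (auto simp: lp_optimal_def intro: main_bound)

end
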